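(* Let $k_0>0$ and let $w\in C^2(\mathbb{R})$ be real-valued with $\lim_{x\to\pm\infty}w(x)=\mp k_0$, such that $U(x)=-w(x)^2-iw'(x)+k_0^2$ satisfies $\int_{\mathbb{R}}(1+|x|)|U(x)|\,dx<\infty$ and $w(x)\to\mp k_0$ fast enough that $\lim_{x\to\pm\infty}(w(x)\pm k_0)=0$ uniformly governs the asymptotics below. For real $k\neq0$ let $\phi_{1,2}^{L,R}(x;k)$ be the Jost solutions of $-\psi''+U\psi=k^2\psi$, i.e. the solutions with $\phi_1^L\sim e^{ikx},\ \phi_2^L\sim e^{-ikx}$ as $x\to-\infty$ and $\phi_1^R\sim e^{ikx},\ \phi_2^R\sim e^{-ikx}$ as $x\to+\infty$ (with corresponding asymptotics of derivatives), and let the transfer matrix $M(k)=(M_{ij}(k))$ be defined by $\phi_1^L=M_{11}\phi_1^R+M_{21}\phi_2^R$, $\phi_2^L=M_{12}\phi_1^R+M_{22}\phi_2^R$. Then for every real $k\neq0$, $$(k+k_0)\,M_{22}(k)=(k-k_0)\,\overline{M_{11}(k)},$$ and for every real $k\notin\{0,\pm k_0\}$, $$M_{11}(k)=\overline{M_{22}(k)}\,\frac{k+k_0}{k-k_0},\qquad M_{12}(k)=-\overline{M_{21}(k)}.$$ In particular $M_{22}(k_0)=0$ (a spectral singularity at $k_0$), and if $k_\star\in\mathbb{R}\setminus\{0,\pm k_0\}$ satisfies $M_{22}(k_\star)=0$, then also $M_{11}(k_\star)=0$ (the spectral singularity at $k_\star$ is self-dual).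
   Context: A real $k$ with $M_{22}(k)=0$ is a spectral singularity; it is called self-dual if additionally $M_{11}(k)=0$. Overline denotes complex conjugation. *)

theory Defs
  imports "HOL-Analysis.Analysis"
begin

definition pot :: "(real \<Rightarrow> real) \<Rightarrow> (real \<Rightarrow> real) \<Rightarrow> real \<Rightarrow> real \<Rightarrow> complex" where
  "pot w wd k0 x = - (complex_of_real (w x))\<^sup>2 - \<i> * complex_of_real (wd x) + (complex_of_real k0)\<^sup>2"

definition schr_sol :: "(real \<Rightarrow> complex) \<Rightarrow> real \<Rightarrow> (real \<Rightarrow> complex) \<Rightarrow> (real \<Rightarrow> complex) \<Rightarrow> bool" where
  "schr_sol U k phi phid \<longleftrightarrow>
     (\<exists>phidd. \<forall>x. (phi has_vector_derivative phid x) (at x) \<and>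
                  (phid has_vector_derivative phidd x) (at x) \<and>
                  - phidd x + U x * phi x = (complex_of_real k)\<^sup>2 * phi x)"

text \<open>Jost solution: a solution with phi(x) ~ exp(c x), phi'(x) ~ c exp(c x) along the filter F
  (F = at_bot for x \<rightarrow> -\<infinity>, at_top for x \<rightarrow> +\<infinity>; c = i k or c = -i k).\<close>
definition jost :: "(real \<Rightarrow> complex) \<Rightarrow> real \<Rightarrow> complex \<Rightarrow> real filter \<Rightarrow> (real \<Rightarrow> complex) \<Rightarrow> bool" where
  "jost U k c F phi \<longleftrightarrow>
     (\<exists>phid. schr_sol U k phi phid \<and>
        ((\<lambda>x. phi x - exp (c * complex_of_real x)) \<longlongrightarrow> 0) F \<and>
        ((\<lambda>x. phid x - c * exp (c * complex_of_real x)) \<longlongrightarrow> 0) F)"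

end

theory Submission
  imports Defs
begin

definition approx :: "real filter \<Rightarrow> (real \<Rightarrow> complex) \<Rightarrow> (real \<Rightarrow> complex) \<Rightarrow> bool" where
  "approx F r s \<longleftrightarrow> ((\<lambda>x. r x - s x) \<longlongrightarrow> 0) F"

definition bnd :: "(real \<Rightarrow> complex) \<Rightarrow> bool" where
  "bnd s \<longleftrightarrow> (\<exists>B. \<forall>x. norm (s x) \<le> B)"

lemma approx_add: "approx F r s \<Longrightarrow> approx F r' s' \<Longrightarrow> approx F (\<lambda>x. r x + r' x) (\<lambda>x. s x + s' x)"
  unfolding approx_def using tendsto_add[of "\<lambda>x. r x - s x" 0 F "\<lambda>x. r' x - s' x" 0]
  by (simp add: algebra_simps)

lemma approx_cmult: "approx F r s \<Longrightarrow> approx F (\<lambda>x. c * r x) (\<lambda>x. c * s x)"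
  unfolding approx_def using tendsto_mult[OF tendsto_const[of c], of "\<lambda>x. r x - s x" 0 F]
  by (simp add: algebra_simps)

lemma approx_cnj: "approx F r s \<Longrightarrow> approx F (\<lambda>x. cnj (r x)) (\<lambda>x. cnj (s x))"
  unfolding approx_def using tendsto_cnj[of "\<lambda>x. r x - s x" 0 F] by simp

lemma approx_cong: "approx F r s \<Longrightarrow> (\<And>x. s x = s' x) \<Longrightarrow> approx F r s'"
  by (simp add: approx_def)

lemma approx_const: "approx F (\<lambda>x. c) (\<lambda>x. c)" by (simp add: approx_def)

lemma bnd_const: "bnd (\<lambda>x. c)" unfolding bnd_def by blast

lemma bnd_add: "bnd s \<Longrightarrow> bnd s' \<Longrightarrow> bnd (\<lambda>x. s x + s' x)"
  unfolding bnd_def by (meson add_mono norm_triangle_le)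

lemma bnd_mult: "bnd s \<Longrightarrow> bnd s' \<Longrightarrow> bnd (\<lambda>x. s x * s' x)"
proof -
  assume "bnd s" "bnd s'"
  then obtain B B' where B: "\<And>x. norm (s x) \<le> B" and B': "\<And>x. norm (s' x) \<le> B'" unfolding bnd_def by blast
  have "norm (s x * s' x) \<le> B * B'" for x
    by (metis B B' mult_mono' norm_ge_zero norm_mult)
  then show ?thesis unfolding bnd_def by blast
qed

lemma bnd_cnj: "bnd s \<Longrightarrow> bnd (\<lambda>x. cnj (s x))" unfolding bnd_def by simp

lemma bnd_exp: "bnd (\<lambda>x. exp (\<i> * complex_of_real a * complex_of_real x))"
  unfolding bnd_def
proof (intro exI allI)
  fix x
  have "\<i> * complex_of_real a * complex_of_real x = \<i> * complex_of_real (a*x)" by simp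
  then show "norm (exp (\<i> * complex_of_real a * complex_of_real x)) \<le> 1"
    by (simp only: norm_exp_i_times)
qed

lemma approx_zero_mult: "((f::real\<Rightarrow>complex) \<longlongrightarrow> 0) F \<Longrightarrow> bnd g \<Longrightarrow> ((\<lambda>x. f x * g x) \<longlongrightarrow> 0) F"
proof -
  assume f: "(f \<longlongrightarrow> 0) F" and "bnd g"
  then obtain B where B: "\<And>x. norm (g x) \<le> B" unfolding bnd_def by blast
  have "Bfun g F" by (rule BfunI[where K=B]) (use B in auto)
  then show ?thesis using bounded_bilinear.Zfun_prod_Bfun[OF bounded_bilinear_mult, of f F g] f
    by (simp add: tendsto_Zfun_iff)
qed

lemma approx_mult:
  assumes "approx F r s" "approx F r' s'" "bnd s" "bnd s'"
  shows "approx F (\<lambda>x. r x * r' x) (\<lambda>x. s x * s' x)"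
proof -
  have e: "r x * r' x - s x * s' x = (r x - s x) * (r' x - s' x) + (r x - s x) * s' x + (r' x - s' x) * s x" for x
    by (simp add: algebra_simps)
  have a: "((\<lambda>x. (r x - s x) * (r' x - s' x)) \<longlongrightarrow> 0) F"
    using tendsto_mult[OF assms(1)[unfolded approx_def] assms(2)[unfolded approx_def]] by simp
  have b: "((\<lambda>x. (r x - s x) * s' x) \<longlongrightarrow> 0) F"
    using approx_zero_mult assms approx_def by blast
  have c: "((\<lambda>x. (r' x - s' x) * s x) \<longlongrightarrow> 0) F"
    using approx_zero_mult assms approx_def by blast
  show ?thesis unfolding approx_def e using tendsto_add[OF tendsto_add[OF a b] c] by simp
qed

lemma approx_real: "(w \<longlongrightarrow> c) F \<Longrightarrow> approx F (\<lambda>x. complex_of_real (w x)) (\<lambda>x. complex_of_real c)"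
  unfolding approx_def using tendsto_of_real[of w c F] tendsto_diff[OF _ tendsto_const, of _ "complex_of_real c" F "complex_of_real c"]
  by (metis (no_types) Lim_null)

lemma approx_const_eq: "F \<noteq> bot \<Longrightarrow> approx F (\<lambda>x. c) (\<lambda>x. d) \<Longrightarrow> c = d"
  unfolding approx_def using tendsto_const_iff[of F "c - d" 0] by simp

lemma schr_lin:
  assumes "schr_sol U k A Ad" "schr_sol U k B Bd"
  shows "schr_sol U k (\<lambda>x. A x + c * B x) (\<lambda>x. Ad x + c * Bd x)"
proof -
  obtain Add where a: "\<forall>x. (A has_vector_derivative Ad x) (at x) \<and> (Ad has_vector_derivative Add x) (at x) \<and>
     - Add x + U x * A x = (complex_of_real k)\<^sup>2 * A x" using assms(1) unfolding schr_sol_def by blast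
  obtain Bdd where b: "\<forall>x. (B has_vector_derivative Bd x) (at x) \<and> (Bd has_vector_derivative Bdd x) (at x) \<and>
     - Bdd x + U x * B x = (complex_of_real k)\<^sup>2 * B x" using assms(2) unfolding schr_sol_def by blast
  show ?thesis unfolding schr_sol_def
    apply (rule exI[of _ "\<lambda>x. Add x + c * Bdd x"])
    using a b by (auto intro!: derivative_eq_intros simp: algebra_simps)
qed

lemma wronsk_const:
  assumes "schr_sol U k A Ad" "schr_sol U k B Bd"
  obtains c where "\<And>x. A x * Bd x - Ad x * B x = c"
proof -
  obtain Add where a: "\<forall>x. (A has_vector_derivative Ad x) (at x) \<and> (Ad has_vector_derivative Add x) (at x) \<and>
     - Add x + U x * A x = (complex_of_real k)\<^sup>2 * A x" using assms(1) unfolding schr_sol_def by blast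
  obtain Bdd where b: "\<forall>x. (B has_vector_derivative Bd x) (at x) \<and> (Bd has_vector_derivative Bdd x) (at x) \<and>
     - Bdd x + U x * B x = (complex_of_real k)\<^sup>2 * B x" using assms(2) unfolding schr_sol_def by blast
  have "((\<lambda>x. A x * Bd x - Ad x * B x) has_vector_derivative 0) (at x within UNIV)" for x
  proof -
    have "((\<lambda>x. A x * Bd x - Ad x * B x) has_vector_derivative
       (A x * Bdd x + Ad x * Bd x - (Ad x * Bd x + Add x * B x))) (at x)"
      using a b by (auto intro!: derivative_eq_intros)
    moreover have "A x * Bdd x + Ad x * Bd x - (Ad x * Bd x + Add x * B x) = 0"
    proof -
      have "Add x = U x * A x - (complex_of_real k)\<^sup>2 * A x" "Bdd x = U x * B x - (complex_of_real k)\<^sup>2 * B x"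
        using a b by (metis add_diff_cancel_left' diff_minus_eq_add)+
      then show ?thesis by (simp only:) (simp add: algebra_simps)
    qed
    ultimately show ?thesis by simp
  qed
  then obtain c where "\<And>x. x \<in> UNIV \<Longrightarrow> A x * Bd x - Ad x * B x = c"
    using has_vector_derivative_zero_constant[of UNIV] by blast
  then show ?thesis using that by blast
qed

lemma bnd_exp2: "bnd (\<lambda>x. exp (- \<i> * complex_of_real a * complex_of_real x))"
  using bnd_exp[of "-a"] by simp

lemma T_sol:
  assumes S: "schr_sol (pot w wd k0) k phi phid"
    and wD: "\<forall>x. (w has_real_derivative wd x) (at x)"
  shows "schr_sol (pot w wd k0) k (\<lambda>x. cnj (phid x + \<i> * complex_of_real (w x) * phi x))
     (\<lambda>x. cnj ((complex_of_real k0 ^ 2 - complex_of_real k ^ 2 - complex_of_real (w x) ^ 2) * phi x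
        + \<i> * complex_of_real (w x) * phid x))"
proof -
  obtain pdd where a: "\<forall>x. (phi has_vector_derivative phid x) (at x) \<and> (phid has_vector_derivative pdd x) (at x) \<and>
     - pdd x + pot w wd k0 x * phi x = (complex_of_real k)\<^sup>2 * phi x" using S unfolding schr_sol_def by blast
  have pdd: "pdd x = (complex_of_real k0 ^ 2 - complex_of_real k ^ 2 - complex_of_real (w x) ^ 2 - \<i> * complex_of_real (wd x)) * phi x" for x
  proof -
    have "- pdd x + pot w wd k0 x * phi x = (complex_of_real k)\<^sup>2 * phi x" using a by blast
    then show ?thesis unfolding pot_def by (simp add: algebra_simps)
  qed
  have wv: "((\<lambda>x. complex_of_real (w x)) has_vector_derivative complex_of_real (wd x)) (at x)" for x
    using wD by (auto intro!: derivative_eq_intros)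
  show ?thesis unfolding schr_sol_def
  proof (intro exI[of _ "\<lambda>x. cnj (- complex_of_real (w x) * complex_of_real (wd x) * phi x
       + (complex_of_real k0 ^ 2 - complex_of_real k ^ 2 - complex_of_real (w x) ^ 2 + \<i> * complex_of_real (wd x)) * phid x
       + \<i> * complex_of_real (w x) * (complex_of_real k0 ^ 2 - complex_of_real k ^ 2 - complex_of_real (w x) ^ 2) * phi x)"] allI conjI)
    fix x
    have "((\<lambda>x. cnj (phid x + \<i> * complex_of_real (w x) * phi x)) has_vector_derivative
      cnj (pdd x + (\<i> * complex_of_real (w x) * phid x + \<i> * complex_of_real (wd x) * phi x))) (at x)"
      using a wv wD by (auto intro!: derivative_eq_intros)
    then show "((\<lambda>x. cnj (phid x + \<i> * complex_of_real (w x) * phi x)) has_vector_derivative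
      cnj ((complex_of_real k0 ^ 2 - complex_of_real k ^ 2 - complex_of_real (w x) ^ 2) * phi x
        + \<i> * complex_of_real (w x) * phid x)) (at x)"
      unfolding pdd by (simp add: algebra_simps)
    have "((\<lambda>x. cnj ((complex_of_real k0 ^ 2 - complex_of_real k ^ 2 - complex_of_real (w x) ^ 2) * phi x
        + \<i> * complex_of_real (w x) * phid x)) has_vector_derivative
      cnj ((complex_of_real k0 ^ 2 - complex_of_real k ^ 2 - complex_of_real (w x) ^ 2) * phid x
        + (- (2 * complex_of_real (w x) * complex_of_real (wd x))) * phi x
        + (\<i> * complex_of_real (w x) * pdd x + \<i> * complex_of_real (wd x) * phid x))) (at x)"
      using a wv wD by (auto intro!: derivative_eq_intros simp: power2_eq_square algebra_simps)
    then show "((\<lambda>x. cnj ((complex_of_real k0 ^ 2 - complex_of_real k ^ 2 - complex_of_real (w x) ^ 2) * phi x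
        + \<i> * complex_of_real (w x) * phid x)) has_vector_derivative
      cnj (- complex_of_real (w x) * complex_of_real (wd x) * phi x
       + (complex_of_real k0 ^ 2 - complex_of_real k ^ 2 - complex_of_real (w x) ^ 2 + \<i> * complex_of_real (wd x)) * phid x
       + \<i> * complex_of_real (w x) * (complex_of_real k0 ^ 2 - complex_of_real k ^ 2 - complex_of_real (w x) ^ 2) * phi x)) (at x)"
      unfolding pdd by (simp add: algebra_simps power2_eq_square)
    show "- cnj (- complex_of_real (w x) * complex_of_real (wd x) * phi x
       + (complex_of_real k0 ^ 2 - complex_of_real k ^ 2 - complex_of_real (w x) ^ 2 + \<i> * complex_of_real (wd x)) * phid x
       + \<i> * complex_of_real (w x) * (complex_of_real k0 ^ 2 - complex_of_real k ^ 2 - complex_of_real (w x) ^ 2) * phi x)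
      + pot w wd k0 x * cnj (phid x + \<i> * complex_of_real (w x) * phi x) =
      (complex_of_real k)\<^sup>2 * cnj (phid x + \<i> * complex_of_real (w x) * phi x)"
      unfolding pot_def by (simp add: algebra_simps power2_eq_square)
  qed
qed

lemma two_exp_zero:
  assumes k: "k \<noteq> 0"
    and L: "((\<lambda>x. a * exp (\<i> * complex_of_real k * complex_of_real x) + b * exp (- \<i> * complex_of_real k * complex_of_real x)) \<longlongrightarrow> 0) at_top"
  shows "a = 0 \<and> b = 0"
proof -
  define g where "g x = a * exp (\<i> * complex_of_real k * complex_of_real x) + b * exp (- \<i> * complex_of_real k * complex_of_real x)" for x
  define h where "h = pi / (2 * k)"
  have sh: "filterlim (\<lambda>x. x + h) at_top at_top"
    using filterlim_tendsto_add_at_top[OF tendsto_const filterlim_ident, of h] by (simp add: add.commute)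
  have g0: "(g \<longlongrightarrow> 0) at_top" using L unfolding g_def .
  have g1: "((\<lambda>x. g (x + h)) \<longlongrightarrow> 0) at_top" using tendsto_compose_filtermap g0 sh
    by (metis filterlim_compose)
  have e1: "exp (\<i> * complex_of_real k * complex_of_real (x + h)) = \<i> * exp (\<i> * complex_of_real k * complex_of_real x)" for x
  proof -
    have "\<i> * complex_of_real k * complex_of_real (x + h) = \<i> * complex_of_real k * complex_of_real x + \<i> * complex_of_real (pi/2)"
      using k by (simp add: h_def algebra_simps)
    moreover have "exp (\<i> * complex_of_real (pi/2)) = \<i>"
      using cis_conv_exp[of "pi/2"] by (simp add: complex_eq_iff)
    ultimately show ?thesis by (simp only: exp_add) simp
  qed
  have e2: "exp (- \<i> * complex_of_real k * complex_of_real (x + h)) = - \<i> * exp (- \<i> * complex_of_real k * complex_of_real x)" for x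
  proof -
    have "- \<i> * complex_of_real k * complex_of_real (x + h) = - \<i> * complex_of_real k * complex_of_real x + (- \<i> * complex_of_real (pi/2))"
      using k by (simp add: h_def algebra_simps)
    moreover have "exp (- \<i> * complex_of_real (pi/2)) = - \<i>"
      using cis_conv_exp[of "-pi/2"] by (simp add: complex_eq_iff)
    ultimately show ?thesis by (simp only: exp_add) simp
  qed
  have "((\<lambda>x. g x - \<i> * g (x + h)) \<longlongrightarrow> 0) at_top"
    using tendsto_diff[OF g0 tendsto_mult[OF tendsto_const g1]] by simp
  moreover have "g x - \<i> * g (x + h) = 2 * a * exp (\<i> * complex_of_real k * complex_of_real x)" for x
    unfolding g_def e1 e2 by (simp add: algebra_simps)
  ultimately have "((\<lambda>x. 2 * a * exp (\<i> * complex_of_real k * complex_of_real x)) \<longlongrightarrow> 0) at_top" by simp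
  from tendsto_norm[OF this] have "((\<lambda>x::real. 2 * norm a) \<longlongrightarrow> 0) at_top"
    by (simp add: norm_mult mult.assoc[symmetric] norm_exp_i_times[of "k * _"])
  then have a0: "a = 0" using tendsto_const_iff[of "at_top::real filter" "2 * norm a" 0] by simp
  then have "((\<lambda>x. b * exp (- \<i> * complex_of_real k * complex_of_real x)) \<longlongrightarrow> 0) at_top" using g0 unfolding g_def by simp
  from tendsto_norm[OF this] have "((\<lambda>x::real. norm b) \<longlongrightarrow> 0) at_top"
    by (simp add: norm_mult)
  then have "b = 0" using tendsto_const_iff[of "at_top::real filter" "norm b" 0] by simp
  with a0 show ?thesis by simp
qed

lemma approx_cong_left: "approx F r s \<Longrightarrow> (\<And>x. r x = r' x) \<Longrightarrow> approx F r' s"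
  by (simp add: approx_def)

lemma approx_tendsto: "(f \<longlongrightarrow> L) F \<Longrightarrow> approx F f (\<lambda>x. L)"
  unfolding approx_def using tendsto_diff[OF _ tendsto_const, of f L F L] by simp

lemma schr_deriv: "schr_sol U k phi phid \<Longrightarrow> (phi has_vector_derivative phid x) (at x)"
  unfolding schr_sol_def by blast

theorem mainTheorem5:
  fixes k0 k :: real
    and w wd wdd :: "real \<Rightarrow> real"
    and phi1L phi2L phi1R phi2R :: "real \<Rightarrow> complex"
    and M11 M12 M21 M22 :: complex
  assumes k0_pos: "k0 > 0"
    and w_deriv: "\<forall>x. (w has_real_derivative wd x) (at x)"
    and wd_deriv: "\<forall>x. (wd has_real_derivative wdd x) (at x)"
    and wdd_cont: "continuous_on UNIV wdd"
    and w_bot: "(w \<longlongrightarrow> k0) at_bot"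
    and w_top: "(w \<longlongrightarrow> - k0) at_top"
    and U_int: "(\<lambda>x. (1 + \<bar>x\<bar>) * cmod (pot w wd k0 x)) integrable_on UNIV"
    and k_nz: "k \<noteq> 0"
    and J1L: "jost (pot w wd k0) k (\<i> * complex_of_real k) at_bot phi1L"
    and J2L: "jost (pot w wd k0) k (- \<i> * complex_of_real k) at_bot phi2L"
    and J1R: "jost (pot w wd k0) k (\<i> * complex_of_real k) at_top phi1R"
    and J2R: "jost (pot w wd k0) k (- \<i> * complex_of_real k) at_top phi2R"
    and M1: "\<forall>x. phi1L x = M11 * phi1R x + M21 * phi2R x"
    and M2: "\<forall>x. phi2L x = M12 * phi1R x + M22 * phi2R x"
  shows "complex_of_real (k + k0) * M22 = complex_of_real (k - k0) * cnj M11
    \<and> (k \<noteq> k0 \<and> k \<noteq> - k0 \<longrightarrow>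
          M11 = cnj M22 * complex_of_real ((k + k0) / (k - k0)) \<and> M12 = - cnj M21)
    \<and> (k = k0 \<longrightarrow> M22 = 0)
    \<and> (k \<noteq> k0 \<and> k \<noteq> - k0 \<and> M22 = 0 \<longrightarrow> M11 = 0)"
proof -
  define U where "U = pot w wd k0"
  define ck where "ck = complex_of_real k"
  define c0 where "c0 = complex_of_real k0"
  define W where "W x = complex_of_real (w x)" for x
  define E1 where "E1 x = exp (\<i> * complex_of_real k * complex_of_real x)" for x
  define E2 where "E2 x = exp (- \<i> * complex_of_real k * complex_of_real x)" for x
  have bE1: "bnd E1" unfolding E1_def by (rule bnd_exp)
  have bE2: "bnd E2" unfolding E2_def by (rule bnd_exp2)
  have cE1: "cnj (E1 x) = E2 x" for x unfolding E1_def E2_def by (simp add: exp_cnj)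
  have cE2: "cnj (E2 x) = E1 x" for x unfolding E1_def E2_def by (simp add: exp_cnj)
  have E12: "E1 x * E2 x = 1" for x unfolding E1_def E2_def by (simp add: exp_add[symmetric])
  obtain p1Ld where S1L: "schr_sol U k phi1L p1Ld" and l1L: "approx at_bot phi1L E1"
    and d1L: "approx at_bot p1Ld (\<lambda>x. \<i> * ck * E1 x)"
    using J1L unfolding jost_def approx_def U_def E1_def ck_def by (auto simp: mult.assoc)
  obtain p2Ld where S2L: "schr_sol U k phi2L p2Ld" and l2L: "approx at_bot phi2L E2"
    and d2L: "approx at_bot p2Ld (\<lambda>x. - \<i> * ck * E2 x)"
    using J2L unfolding jost_def approx_def U_def E2_def ck_def by (auto simp: mult.assoc)
  obtain p1Rd where S1R: "schr_sol U k phi1R p1Rd" and l1R: "approx at_top phi1R E1"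
    and d1R: "approx at_top p1Rd (\<lambda>x. \<i> * ck * E1 x)"
    using J1R unfolding jost_def approx_def U_def E1_def ck_def by (auto simp: mult.assoc)
  obtain p2Rd where S2R: "schr_sol U k phi2R p2Rd" and l2R: "approx at_top phi2R E2"
    and d2R: "approx at_top p2Rd (\<lambda>x. - \<i> * ck * E2 x)"
    using J2R unfolding jost_def approx_def U_def E2_def ck_def by (auto simp: mult.assoc)
  have p1Ld_eq: "p1Ld x = M11 * p1Rd x + M21 * p2Rd x" for x
  proof -
    have e: "phi1L = (\<lambda>x. M11 * phi1R x + M21 * phi2R x)" using M1 by auto
    have "(phi1L has_vector_derivative M11 * p1Rd x + M21 * p2Rd x) (at x)"
      unfolding e using schr_deriv[OF S1R, of x] schr_deriv[OF S2R, of x]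
      by (auto intro!: derivative_eq_intros)
    then show ?thesis using vector_derivative_unique_at schr_deriv[OF S1L, of x] by blast
  qed
  define TL where "TL x = cnj (p1Ld x + \<i> * W x * phi1L x)" for x
  define TLd where "TLd x = cnj ((c0 ^ 2 - ck ^ 2 - W x ^ 2) * phi1L x + \<i> * W x * p1Ld x)" for x
  have STL: "schr_sol U k TL TLd"
    using T_sol[OF S1L[unfolded U_def] w_deriv] unfolding U_def TL_def TLd_def W_def c0_def ck_def by simp
  define D where "D x = TL x + \<i> * (ck + c0) * phi2L x" for x
  define Dd where "Dd x = TLd x + \<i> * (ck + c0) * p2Ld x" for x
  have SD: "schr_sol U k D Dd" unfolding D_def Dd_def by (rule schr_lin[OF STL S2L])
  have wb: "approx at_bot (\<lambda>x. \<i> * W x) (\<lambda>x. \<i> * c0)"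
    unfolding W_def c0_def by (rule approx_tendsto) (auto intro!: tendsto_intros w_bot)
  have wb2: "approx at_bot (\<lambda>x. c0 ^ 2 - ck ^ 2 - W x ^ 2) (\<lambda>x. c0 ^ 2 - ck ^ 2 - c0 ^ 2)"
    unfolding W_def c0_def by (intro approx_tendsto tendsto_intros w_bot)
  have Db: "approx at_bot D (\<lambda>x. 0)"
  proof -
    have "approx at_bot (\<lambda>x. \<i> * W x * phi1L x) (\<lambda>x. \<i> * c0 * E1 x)"
      by (rule approx_mult[OF wb l1L bnd_const bE1])
    from approx_add[OF d1L this] have "approx at_bot (\<lambda>x. p1Ld x + \<i> * W x * phi1L x) (\<lambda>x. \<i> * ck * E1 x + \<i> * c0 * E1 x)" .
    from approx_cnj[OF this] have "approx at_bot TL (\<lambda>x. cnj (\<i> * ck * E1 x + \<i> * c0 * E1 x))"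
      unfolding TL_def .
    from approx_add[OF this approx_cmult[OF l2L, of "\<i> * (ck + c0)"]]
    have "approx at_bot D (\<lambda>x. cnj (\<i> * ck * E1 x + \<i> * c0 * E1 x) + \<i> * (ck + c0) * E2 x)"
      unfolding D_def .
    then show ?thesis by (rule approx_cong) (simp add: cE1 ck_def c0_def algebra_simps)
  qed
  have Ddb: "approx at_bot Dd (\<lambda>x. 0)"
  proof -
    have a: "approx at_bot (\<lambda>x. (c0 ^ 2 - ck ^ 2 - W x ^ 2) * phi1L x) (\<lambda>x. (c0 ^ 2 - ck ^ 2 - c0 ^ 2) * E1 x)"
      by (rule approx_mult[OF wb2 l1L bnd_const bE1])
    have b: "approx at_bot (\<lambda>x. \<i> * W x * p1Ld x) (\<lambda>x. \<i> * c0 * (\<i> * ck * E1 x))"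
      by (rule approx_mult[OF wb d1L bnd_const]) (rule bnd_mult[OF bnd_const bE1])
    from approx_cnj[OF approx_add[OF a b]]
    have "approx at_bot TLd (\<lambda>x. cnj ((c0 ^ 2 - ck ^ 2 - c0 ^ 2) * E1 x + \<i> * c0 * (\<i> * ck * E1 x)))"
      unfolding TLd_def .
    from approx_add[OF this approx_cmult[OF d2L, of "\<i> * (ck + c0)"]]
    have "approx at_bot Dd (\<lambda>x. cnj ((c0 ^ 2 - ck ^ 2 - c0 ^ 2) * E1 x + \<i> * c0 * (\<i> * ck * E1 x)) + \<i> * (ck + c0) * (- \<i> * ck * E2 x))"
      unfolding Dd_def .
    then show ?thesis by (rule approx_cong) (simp add: cE1 ck_def c0_def algebra_simps power2_eq_square)
  qed
  have nb: "(at_bot :: real filter) \<noteq> bot" by simp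
  obtain c1 where c1: "\<And>x. D x * p1Ld x - Dd x * phi1L x = c1" using wronsk_const[OF SD S1L] by blast
  obtain c2 where c2: "\<And>x. D x * p2Ld x - Dd x * phi2L x = c2" using wronsk_const[OF SD S2L] by blast
  obtain c3 where c3: "\<And>x. phi1L x * p2Ld x - p1Ld x * phi2L x = c3" using wronsk_const[OF S1L S2L] by blast
  have "approx at_bot (\<lambda>x. D x * p1Ld x - Dd x * phi1L x) (\<lambda>x. 0 * (\<i> * ck * E1 x) + (-1) * (0 * E1 x))"
    using approx_add[OF approx_mult[OF Db d1L bnd_const bnd_mult[OF bnd_const bE1]]
      approx_cmult[OF approx_mult[OF Ddb l1L bnd_const bE1], of "-1"]] by simp
  then have "approx at_bot (\<lambda>x. c1) (\<lambda>x. 0)"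
    by (rule approx_cong_left[OF approx_cong]) (simp_all add: c1)
  then have "c1 = 0" using approx_const_eq[OF nb] by blast
  have "approx at_bot (\<lambda>x. D x * p2Ld x - Dd x * phi2L x) (\<lambda>x. 0 * (- \<i> * ck * E2 x) + (-1) * (0 * E2 x))"
    using approx_add[OF approx_mult[OF Db d2L bnd_const bnd_mult[OF bnd_const bE2]]
      approx_cmult[OF approx_mult[OF Ddb l2L bnd_const bE2], of "-1"]] by simp
  then have "approx at_bot (\<lambda>x. c2) (\<lambda>x. 0)"
    by (rule approx_cong_left[OF approx_cong]) (simp_all add: c2)
  then have "c2 = 0" using approx_const_eq[OF nb] by blast
  have "approx at_bot (\<lambda>x. phi1L x * p2Ld x - p1Ld x * phi2L x) (\<lambda>x. E1 x * (- \<i> * ck * E2 x) + (-1) * ((\<i> * ck * E1 x) * E2 x))"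
    using approx_add[OF approx_mult[OF l1L d2L bE1 bnd_mult[OF bnd_const bE2]]
      approx_cmult[OF approx_mult[OF d1L l2L bnd_mult[OF bnd_const bE1] bE2], of "-1"]] by simp
  then have "approx at_bot (\<lambda>x. c3) (\<lambda>x. -2 * \<i> * ck)"
    by (rule approx_cong_left[OF approx_cong]) (rule c3 | simp add: algebra_simps E12[simplified mult.commute])+
  then have "c3 = -2 * \<i> * ck" using approx_const_eq[OF nb] by blast
  then have c3nz: "c3 \<noteq> 0" using k_nz by (simp add: ck_def)
  have D0: "D x = 0" for x
  proof -
    have "D x * (phi1L x * p2Ld x - p1Ld x * phi2L x) =
      phi1L x * (D x * p2Ld x - Dd x * phi2L x) - phi2L x * (D x * p1Ld x - Dd x * phi1L x)"
      by (simp add: algebra_simps)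
    then have "D x * c3 = 0" using c1 c2 c3 \<open>c1 = 0\<close> \<open>c2 = 0\<close> by simp
    then show ?thesis using c3nz by simp
  qed
  have wt: "approx at_top (\<lambda>x. \<i> * W x) (\<lambda>x. \<i> * (- c0))"
    unfolding W_def c0_def using tendsto_mult[OF tendsto_const tendsto_of_real[OF w_top], of \<i>]
    by (intro approx_tendsto) simp
  have TLeq: "TL x = cnj (M11 * (p1Rd x + \<i> * W x * phi1R x) + M21 * (p2Rd x + \<i> * W x * phi2R x))" for x
    unfolding TL_def p1Ld_eq M1[rule_format] by (simp add: algebra_simps)
  have r1: "approx at_top (\<lambda>x. p1Rd x + \<i> * W x * phi1R x) (\<lambda>x. \<i> * ck * E1 x + \<i> * (- c0) * E1 x)"
    by (rule approx_add[OF d1R approx_mult[OF wt l1R bnd_const bE1]])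
  have r2: "approx at_top (\<lambda>x. p2Rd x + \<i> * W x * phi2R x) (\<lambda>x. - \<i> * ck * E2 x + \<i> * (- c0) * E2 x)"
    by (rule approx_add[OF d2R approx_mult[OF wt l2R bnd_const bE2]])
  have "approx at_top TL (\<lambda>x. cnj (M11 * (\<i> * ck * E1 x + \<i> * (- c0) * E1 x) + M21 * (- \<i> * ck * E2 x + \<i> * (- c0) * E2 x)))"
    using approx_cnj[OF approx_add[OF approx_cmult[OF r1, of M11] approx_cmult[OF r2, of M21]]]
    unfolding TLeq .
  moreover have "approx at_top (\<lambda>x. \<i> * (ck + c0) * phi2L x) (\<lambda>x. \<i> * (ck + c0) * (M12 * E1 x + M22 * E2 x))"
    using approx_cmult[OF approx_add[OF approx_cmult[OF l1R, of M12] approx_cmult[OF l2R, of M22]], of "\<i> * (ck + c0)"]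
    unfolding M2[rule_format] .
  ultimately have "approx at_top D (\<lambda>x. cnj (M11 * (\<i> * ck * E1 x + \<i> * (- c0) * E1 x) + M21 * (- \<i> * ck * E2 x + \<i> * (- c0) * E2 x))
      + \<i> * (ck + c0) * (M12 * E1 x + M22 * E2 x))"
    unfolding D_def by (rule approx_add)
  then have "approx at_top D (\<lambda>x. (cnj M21 * \<i> * (ck + c0) + \<i> * (ck + c0) * M12) * E1 x
      + (cnj M11 * \<i> * (c0 - ck) + \<i> * (ck + c0) * M22) * E2 x)"
    by (rule approx_cong) (simp add: cE1 cE2 ck_def c0_def algebra_simps)
  then have "((\<lambda>x. - ((cnj M21 * \<i> * (ck + c0) + \<i> * (ck + c0) * M12) * E1 x
      + (cnj M11 * \<i> * (c0 - ck) + \<i> * (ck + c0) * M22) * E2 x)) \<longlongrightarrow> 0) at_top"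
    unfolding approx_def D0 by simp
  from tendsto_minus[OF this] have "((\<lambda>x. (cnj M21 * \<i> * (ck + c0) + \<i> * (ck + c0) * M12) * E1 x
      + (cnj M11 * \<i> * (c0 - ck) + \<i> * (ck + c0) * M22) * E2 x) \<longlongrightarrow> 0) at_top" by (simp add: add.commute)
  from two_exp_zero[OF k_nz this[unfolded E1_def E2_def]]
  have A: "cnj M21 * \<i> * (ck + c0) + \<i> * (ck + c0) * M12 = 0"
    and B: "cnj M11 * \<i> * (c0 - ck) + \<i> * (ck + c0) * M22 = 0" by auto
  have "\<i> * ((ck + c0) * M22 - (ck - c0) * cnj M11) = 0" using B by (simp add: algebra_simps)
  then have B1: "(ck + c0) * M22 = (ck - c0) * cnj M11" by simp
  then have B2: "(ck + c0) * cnj M22 = (ck - c0) * M11"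
  proof -
    have "cnj ((ck + c0) * M22) = cnj ((ck - c0) * cnj M11)" using B1 by simp
    then show ?thesis by (simp only: complex_cnj_mult complex_cnj_add complex_cnj_diff complex_cnj_cnj ck_def c0_def complex_cnj_complex_of_real)
  qed
  have "\<i> * (ck + c0) * (cnj M21 + M12) = 0" using A by (simp add: algebra_simps)
  then have A1: "ck + c0 = 0 \<or> M12 = - cnj M21" by (auto simp: add_eq_0_iff)
  have ckr: "ck + c0 = complex_of_real (k + k0)" "ck - c0 = complex_of_real (k - k0)" by (simp_all add: ck_def c0_def)
  show ?thesis
  proof (intro conjI impI)
    show "complex_of_real (k + k0) * M22 = complex_of_real (k - k0) * cnj M11" using B1 ckr by simp
  next
    assume h: "k \<noteq> k0 \<and> k \<noteq> - k0"
    then have nz: "complex_of_real (k - k0) \<noteq> 0" by simp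
    have B3: "complex_of_real (k + k0) * cnj M22 = complex_of_real (k - k0) * M11" using B2 ckr by simp
    have "M11 = complex_of_real (k + k0) * cnj M22 / complex_of_real (k - k0)"
      using nz B3 by (simp add: eq_divide_eq mult.commute)
    then show "M11 = cnj M22 * complex_of_real ((k + k0) / (k - k0))" using ckr by (simp add: field_simps)
    have "ck + c0 \<noteq> 0" using ckr h by (simp add: add_eq_0_iff)
    then show "M12 = - cnj M21" using A1 by simp
  next
    assume "k = k0"
    then show "M22 = 0" using B1 ckr k0_pos by simp
  next
    assume h: "k \<noteq> k0 \<and> k \<noteq> - k0 \<and> M22 = 0"
    then show "M11 = 0" using B1 ckr by simp
  qed
qed

end
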